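(* Let $F$ be any VSCC (over linear profiles) satisfying Coherent Defeat and Tolerant Positive Involvement. Then $F(\mathbf P)\subseteq SC(\mathbf P)$ for every profile $\mathbf P$, where $SC$ is the Split Cycle VSCC.
   Context: Profiles: $\mathbf P:V\to\mathcal L(X)$ with $V$ a nonempty finite set of voters, $X=X(\mathbf P)$ a nonempty finite set of candidates (from fixed infinite sets), $\mathcal L(X)$ the strict linear orders on $X$. $\mathrm{Margin}_{\mathbf P}(x,y)$ = #voters ranking $x$ above $y$ minus #ranking $y$ above $x$; $x$ is majority preferred to $y$ if it is $>0$. Majority path from $x_1$ to $x_n$: $(x_1,\dots,x_n)$ with all $\mathrm{Margin}_{\mathbf P}(x_i,x_{i+1})>0$; strength = minimum of these margins. $(x,y)\in sc(\mathbf P)$ iff $\mathrm{Margin}_{\mathbf P}(x,y)>0$ and it exceeds the strength of every majority path from $y$ to $x$; $SC(\mathbf P)=\{y: \text{no } x \text{ with } (x,y)\in sc(\mathbf P)\}$. A VSCC is $F$ with $\varnothing\ne F(\mathbf P)\subseteq X(\mathbf P)$ for all profiles. Coherent Defeat: if $\mathrm{Margin}_{\mathbf P}(x,y)>0$ and there is no majority path from $y$ to $x$, then $y\notin F(\mathbf P)$. Tolerant Positive Involvement: if $x\in F(\mathbf P)$ and $\mathbf P'$ is obtained from $\mathbf P$ by adding one new voter who ranks $x$ above every other candidate $y$ such that $x$ is not majority preferred to $y$ in $\mathbf P$, then $x\in F(\mathbf P')$. *)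

theory Defs
  imports Main
begin

text \<open>A profile is a triple (V, X, P): a set of voters V, a set of candidates X,
 and for each voter i a binary relation P i on candidates, where P i x y means
 that voter i ranks x above y.\<close>

type_synonym ('v, 'c) profile = "'v set \<times> 'c set \<times> ('v \<Rightarrow> 'c \<Rightarrow> 'c \<Rightarrow> bool)"

definition voters :: "('v, 'c) profile \<Rightarrow> 'v set" where
  "voters Pr = fst Pr"

definition cands :: "('v, 'c) profile \<Rightarrow> 'c set" where
  "cands Pr = fst (snd Pr)"

definition ballot :: "('v, 'c) profile \<Rightarrow> 'v \<Rightarrow> 'c \<Rightarrow> 'c \<Rightarrow> bool" where
  "ballot Pr = snd (snd Pr)"

definition strict_linear_order_on :: "'c set \<Rightarrow> ('c \<Rightarrow> 'c \<Rightarrow> bool) \<Rightarrow> bool" where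
  "strict_linear_order_on X R \<longleftrightarrow>
     (\<forall>x y. R x y \<longrightarrow> x \<in> X \<and> y \<in> X) \<and>
     (\<forall>x. \<not> R x x) \<and>
     (\<forall>x y z. R x y \<longrightarrow> R y z \<longrightarrow> R x z) \<and>
     (\<forall>x\<in>X. \<forall>y\<in>X. x \<noteq> y \<longrightarrow> R x y \<or> R y x)"

definition is_profile :: "('v, 'c) profile \<Rightarrow> bool" where
  "is_profile Pr \<longleftrightarrow>
     finite (voters Pr) \<and> voters Pr \<noteq> {} \<and>
     finite (cands Pr) \<and> cands Pr \<noteq> {} \<and>
     (\<forall>i\<in>voters Pr. strict_linear_order_on (cands Pr) (ballot Pr i)) \<and>
     (\<forall>i. i \<notin> voters Pr \<longrightarrow> (\<forall>x y. \<not> ballot Pr i x y))"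

definition margin :: "('v, 'c) profile \<Rightarrow> 'c \<Rightarrow> 'c \<Rightarrow> int" where
  "margin Pr x y =
     int (card {i \<in> voters Pr. ballot Pr i x y}) - int (card {i \<in> voters Pr. ballot Pr i y x})"

definition majority_path :: "('v, 'c) profile \<Rightarrow> 'c list \<Rightarrow> bool" where
  "majority_path Pr xs \<longleftrightarrow>
     length xs \<ge> 2 \<and> distinct xs \<and>
     (\<forall>k. Suc k < length xs \<longrightarrow> margin Pr (xs ! k) (xs ! Suc k) > 0)"

definition path_strength :: "('v, 'c) profile \<Rightarrow> 'c list \<Rightarrow> int" where
  "path_strength Pr xs = Min {margin Pr (xs ! k) (xs ! Suc k) | k. Suc k < length xs}"

definition sc_defeats :: "('v, 'c) profile \<Rightarrow> 'c \<Rightarrow> 'c \<Rightarrow> bool" where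
  "sc_defeats Pr x y \<longleftrightarrow>
     margin Pr x y > 0 \<and>
     (\<forall>xs. majority_path Pr xs \<and> hd xs = y \<and> last xs = x \<longrightarrow>
           margin Pr x y > path_strength Pr xs)"

definition split_cycle :: "('v, 'c) profile \<Rightarrow> 'c set" where
  "split_cycle Pr = {y \<in> cands Pr. \<not> (\<exists>x. sc_defeats Pr x y)}"

definition vscc :: "(('v, 'c) profile \<Rightarrow> 'c set) \<Rightarrow> bool" where
  "vscc F \<longleftrightarrow> (\<forall>Pr. is_profile Pr \<longrightarrow> F Pr \<noteq> {} \<and> F Pr \<subseteq> cands Pr)"

definition coherent_defeat :: "(('v, 'c) profile \<Rightarrow> 'c set) \<Rightarrow> bool" where
  "coherent_defeat F \<longleftrightarrow>
     (\<forall>Pr x y. is_profile Pr \<longrightarrow> margin Pr x y > 0 \<longrightarrow>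
        \<not> (\<exists>xs. majority_path Pr xs \<and> hd xs = y \<and> last xs = x) \<longrightarrow>
        y \<notin> F Pr)"

definition add_voter :: "('v, 'c) profile \<Rightarrow> 'v \<Rightarrow> ('c \<Rightarrow> 'c \<Rightarrow> bool) \<Rightarrow> ('v, 'c) profile" where
  "add_voter Pr i R = (insert i (voters Pr), cands Pr, (ballot Pr)(i := R))"

definition tolerant_positive_involvement :: "(('v, 'c) profile \<Rightarrow> 'c set) \<Rightarrow> bool" where
  "tolerant_positive_involvement F \<longleftrightarrow>
     (\<forall>Pr x i R. is_profile Pr \<longrightarrow> x \<in> F Pr \<longrightarrow> i \<notin> voters Pr \<longrightarrow>
        strict_linear_order_on (cands Pr) R \<longrightarrow>
        (\<forall>y\<in>cands Pr. y \<noteq> x \<longrightarrow> \<not> margin Pr x y > 0 \<longrightarrow> R x y) \<longrightarrow>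
        x \<in> F (add_voter Pr i R))"

end

theory Submission
  imports Defs
begin

lemma walk_to_path:
  assumes "r\<^sup>*\<^sup>* y z"
  shows "z = y \<or> (\<exists>xs. length xs \<ge> 2 \<and> distinct xs \<and> hd xs = y \<and> last xs = z \<and>
            (\<forall>k. Suc k < length xs \<longrightarrow> r (xs!k) (xs!Suc k)))"
  using assms
proof (induction rule: rtranclp_induct)
  case base then show ?case by simp
next
  case (step z w)
  show ?case
  proof (cases "w = y")
    case True then show ?thesis by simp
  next
    case wy: False
    show ?thesis
    proof (cases "z = y")
      case True
      then show ?thesis using wy step(2)
        by (intro disjI2 exI[of _ "[y,w]"]) (auto simp: less_Suc_eq nth_Cons split: nat.splits)
    next
      case False
      with step(3) obtain xs where xs: "length xs \<ge> 2" "distinct xs" "hd xs = y" "last xs = z"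
        "\<forall>k. Suc k < length xs \<longrightarrow> r (xs!k) (xs!Suc k)" by blast
      show ?thesis
      proof (cases "w \<in> set xs")
        case True
        then obtain j where j: "j < length xs" "xs ! j = w" by (auto simp: in_set_conv_nth)
        have "j \<noteq> 0" using j xs(1,3) wy by (metis hd_conv_nth list.size(3) not_numeral_le_zero)
        have lt: "last (take (Suc j) xs) = xs ! j" using j
          by (subst last_conv_nth) auto
        show ?thesis
          apply (intro disjI2 exI[of _ "take (Suc j) xs"])
          using j xs \<open>j \<noteq> 0\<close> lt
          by (auto simp: hd_take last_conv_nth min_def nth_eq_iff_index_eq distinct_take)
      next
        case False
        show ?thesis
          apply (intro disjI2 exI[of _ "xs @ [w]"])
          using xs False step(2)
          by (auto simp: nth_append last_conv_nth hd_append less_Suc_eq) (metis diff_Suc_Suc minus_nat.diff_0)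
      qed
    qed
  qed
qed

lemma margin_pos_cands:
  assumes P: "is_profile Pr" and m: "margin Pr a b > 0"
  shows "a \<in> cands Pr \<and> b \<in> cands Pr \<and> a \<noteq> b"
proof -
  have "card {i \<in> voters Pr. ballot Pr i a b} \<noteq> 0" using m unfolding margin_def by auto
  then obtain i where "i \<in> voters Pr" "ballot Pr i a b" by (metis (no_types, lifting) Collect_empty_eq card.empty)
  then show ?thesis using P unfolding is_profile_def strict_linear_order_on_def by metis
qed

lemma margin_parity:
  assumes P: "is_profile Pr" and "a \<in> cands Pr" "b \<in> cands Pr" "a \<noteq> b"
  shows "margin Pr a b = 2 * int (card {i \<in> voters Pr. ballot Pr i a b}) - int (card (voters Pr))"
proof -
  let ?A = "{i \<in> voters Pr. ballot Pr i a b}" and ?B = "{i \<in> voters Pr. ballot Pr i b a}"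
  have fin: "finite (voters Pr)" using P by (simp add: is_profile_def)
  have "voters Pr = ?A \<union> ?B" using P assms unfolding is_profile_def strict_linear_order_on_def by blast
  moreover have "?A \<inter> ?B = {}" using P assms unfolding is_profile_def strict_linear_order_on_def by blast
  ultimately have "card (voters Pr) = card ?A + card ?B" using fin
    by (metis (no_types, lifting) card_Un_disjoint finite_Un)
  then show ?thesis unfolding margin_def by simp
qed

lemma add_voter_simps:
  "voters (add_voter Pr i R) = insert i (voters Pr)"
  "cands (add_voter Pr i R) = cands Pr"
  "ballot (add_voter Pr i R) = (ballot Pr)(i := R)"
  by (simp_all add: add_voter_def voters_def cands_def ballot_def)

lemma add_voter_profile:
  assumes P: "is_profile Pr" and i: "i \<notin> voters Pr" and R: "strict_linear_order_on (cands Pr) R"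
  shows "is_profile (add_voter Pr i R)"
  using P i R unfolding is_profile_def add_voter_simps by auto

lemma card_insert_split:
  assumes "finite V" "i \<notin> V"
  shows "int (card {j \<in> insert i V. ((f::'v \<Rightarrow> bool)(i := c)) j}) = int (card {j \<in> V. f j}) + (if c then 1 else 0)"
proof -
  have e: "{j \<in> V. (f(i := c)) j} = {j \<in> V. f j}" using assms(2) by auto
  show ?thesis
  proof (cases c)
    case True
    then have "{j \<in> insert i V. (f(i := c)) j} = insert i {j \<in> V. (f(i := c)) j}" by auto
    then show ?thesis using True assms e by simp
  next
    case False
    then have "{j \<in> insert i V. (f(i := c)) j} = {j \<in> V. (f(i := c)) j}" by auto
    then show ?thesis using False e by simp
  qed
qed

lemma add_voter_margin:
  assumes P: "is_profile Pr" and i: "i \<notin> voters Pr" and R: "strict_linear_order_on (cands Pr) R"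
    and ab: "a \<in> cands Pr" "b \<in> cands Pr" "a \<noteq> b"
  shows "margin (add_voter Pr i R) a b = margin Pr a b + (if R a b then 1 else -1)"
proof -
  have fin: "finite (voters Pr)" using P by (simp add: is_profile_def)
  have 1: "int (card {j \<in> voters (add_voter Pr i R). ballot (add_voter Pr i R) j a b}) =
      int (card {j \<in> voters Pr. ballot Pr j a b}) + (if R a b then 1 else 0)"
  proof -
    have "{j \<in> voters (add_voter Pr i R). ballot (add_voter Pr i R) j a b} =
       (if R a b then insert i {j \<in> voters Pr. ballot Pr j a b} else {j \<in> voters Pr. ballot Pr j a b})"
      using i by (auto simp: add_voter_simps)
    then show ?thesis using fin i by simp
  qed
  have 2: "int (card {j \<in> voters (add_voter Pr i R). ballot (add_voter Pr i R) j b a}) =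
      int (card {j \<in> voters Pr. ballot Pr j b a}) + (if R b a then 1 else 0)"
  proof -
    have "{j \<in> voters (add_voter Pr i R). ballot (add_voter Pr i R) j b a} =
       (if R b a then insert i {j \<in> voters Pr. ballot Pr j b a} else {j \<in> voters Pr. ballot Pr j b a})"
      using i by (auto simp: add_voter_simps)
    then show ?thesis using fin i by simp
  qed
  have "R a b \<longleftrightarrow> \<not> R b a" using R ab unfolding strict_linear_order_on_def by blast
  then show ?thesis using 1 2 unfolding margin_def by auto
qed

lemma strength_set:
  assumes "majority_path Pr xs"
  shows "finite {margin Pr (xs ! k) (xs ! Suc k) | k. Suc k < length xs}"
    "{margin Pr (xs ! k) (xs ! Suc k) | k. Suc k < length xs} \<noteq> {}"
proof -
  have "{margin Pr (xs ! k) (xs ! Suc k) | k. Suc k < length xs} = (\<lambda>k. margin Pr (xs ! k) (xs ! Suc k)) ` {k. Suc k < length xs}"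
    by auto
  moreover have "finite {k. Suc k < length xs}" by (rule finite_subset[of _ "{..<length xs}"]) auto
  ultimately show "finite {margin Pr (xs ! k) (xs ! Suc k) | k. Suc k < length xs}" by simp
  show "{margin Pr (xs ! k) (xs ! Suc k) | k. Suc k < length xs} \<noteq> {}"
    using assms unfolding majority_path_def by (auto intro!: exI[of _ 0])
qed

lemma strength_ge:
  assumes "majority_path Pr xs"
  shows "path_strength Pr xs \<ge> t \<longleftrightarrow> (\<forall>k. Suc k < length xs \<longrightarrow> margin Pr (xs ! k) (xs ! Suc k) \<ge> t)"
  unfolding path_strength_def using strength_set[OF assms] by (auto simp: Min_ge_iff)

lemma strength_in:
  assumes "majority_path Pr xs"
  shows "\<exists>k. Suc k < length xs \<and> path_strength Pr xs = margin Pr (xs ! k) (xs ! Suc k)"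
  using Min_in[OF strength_set[OF assms]] unfolding path_strength_def by auto

lemma lex_trans:
  fixes lvl :: "'c \<Rightarrow> nat"
  assumes o3: "\<forall>x y z. B x y \<longrightarrow> B y z \<longrightarrow> B x z"
  and "lvl a < lvl b \<or> lvl a = lvl b \<and> B a b" "lvl b < lvl c \<or> lvl b = lvl c \<and> B b c"
  shows "lvl a < lvl c \<or> lvl a = lvl c \<and> B a c"
  using assms by auto

lemma margin_anti: "margin Pr a b = - margin Pr b a"
  unfolding margin_def by simp

lemma main_induct:
  fixes F :: "('v, 'c) profile \<Rightarrow> 'c set"
  assumes V: "infinite (UNIV :: 'v set)" and CD: "coherent_defeat F"
    and TPI: "tolerant_positive_involvement F"
  shows "\<forall>Pr. is_profile Pr \<longrightarrow> y \<in> F Pr \<longrightarrow> margin Pr x y > 0 \<longrightarrow> nat (margin Pr x y) = n \<longrightarrow>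
     (\<forall>xs. majority_path Pr xs \<and> hd xs = y \<and> last xs = x \<longrightarrow> path_strength Pr xs < margin Pr x y) \<longrightarrow> False"
proof (induction n)
  case 0
  then show ?case by auto
next
  case (Suc n)
  show ?case
  proof (intro allI impI)
    fix Pr :: "('v, 'c) profile"
    assume P: "is_profile Pr" and yF: "y \<in> F Pr" and Mpos: "margin Pr x y > 0"
      and Mn: "nat (margin Pr x y) = Suc n"
      and SC: "\<forall>xs. majority_path Pr xs \<and> hd xs = y \<and> last xs = x \<longrightarrow> path_strength Pr xs < margin Pr x y"
    define M where "M = margin Pr x y"
    have xy: "x \<in> cands Pr" "y \<in> cands Pr" "x \<noteq> y" using margin_pos_cands[OF P Mpos] by auto
    obtain xs0 where xs0: "majority_path Pr xs0" "hd xs0 = y" "last xs0 = x"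
      using CD P Mpos yF unfolding coherent_defeat_def by blast
    obtain k0 where k0: "Suc k0 < length xs0" "path_strength Pr xs0 = margin Pr (xs0 ! k0) (xs0 ! Suc k0)"
      using strength_in[OF xs0(1)] by blast
    have e0: "margin Pr (xs0 ! k0) (xs0 ! Suc k0) > 0" using xs0(1) k0(1) unfolding majority_path_def by blast
    have s_lt: "margin Pr (xs0 ! k0) (xs0 ! Suc k0) < M" using SC xs0 k0 M_def by auto
    have M3: "M \<ge> 3"
    proof -
      have c: "xs0 ! k0 \<in> cands Pr" "xs0 ! Suc k0 \<in> cands Pr" "xs0 ! k0 \<noteq> xs0 ! Suc k0"
        using margin_pos_cands[OF P e0] by auto
      let ?c1 = "int (card {i \<in> voters Pr. ballot Pr i (xs0 ! k0) (xs0 ! Suc k0)})"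
      let ?c2 = "int (card {i \<in> voters Pr. ballot Pr i x y})"
      have "?c1 < ?c2"
        using margin_parity[OF P c] margin_parity[OF P xy] s_lt unfolding M_def by linarith
      then have "?c1 + 1 \<le> ?c2" by linarith
      then show ?thesis
        using margin_parity[OF P c] margin_parity[OF P xy] e0 unfolding M_def by linarith
    qed
    define H where "H = {z. (\<lambda>a b. margin Pr a b \<ge> M)\<^sup>*\<^sup>* y z}"
    have yH: "y \<in> H" unfolding H_def by simp
    have Hcl: "b \<in> H" if "a \<in> H" "margin Pr a b \<ge> M" for a b
      using that unfolding H_def by (auto intro: rtranclp.rtrancl_into_rtrancl)
    have xH: "x \<notin> H"
    proof
      assume "x \<in> H"
      then have "(\<lambda>a b. margin Pr a b \<ge> M)\<^sup>*\<^sup>* y x" unfolding H_def by simp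
      from walk_to_path[OF this] xy(3) obtain xs where xs: "length xs \<ge> 2" "distinct xs" "hd xs = y" "last xs = x"
        "\<forall>k. Suc k < length xs \<longrightarrow> margin Pr (xs!k) (xs!Suc k) \<ge> M" by blast
      have mp: "majority_path Pr xs" unfolding majority_path_def using xs M3 by force
      have "path_strength Pr xs \<ge> M" using strength_ge[OF mp] xs(5) by blast
      then show False using SC mp xs M_def by force
    qed
    obtain v0 where v0: "v0 \<in> voters Pr" using P unfolding is_profile_def by blast
    have ord0: "strict_linear_order_on (cands Pr) (ballot Pr v0)" using P v0 unfolding is_profile_def by blast
    define lvl where "lvl z = (if z = y then 1 else if z \<in> H then 3 else if margin Pr y z > 0 then 0 else (2::nat))" for z
    define R where "R a b = (a \<in> cands Pr \<and> b \<in> cands Pr \<and> (lvl a < lvl b \<or> lvl a = lvl b \<and> ballot Pr v0 a b))" for a b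
    have Rord: "strict_linear_order_on (cands Pr) R"
    proof -
      have o: "\<forall>x y. ballot Pr v0 x y \<longrightarrow> x \<in> cands Pr \<and> y \<in> cands Pr"
        "\<forall>x. \<not> ballot Pr v0 x x"
        "\<forall>x y z. ballot Pr v0 x y \<longrightarrow> ballot Pr v0 y z \<longrightarrow> ballot Pr v0 x z"
        "\<forall>x\<in>cands Pr. \<forall>y\<in>cands Pr. x \<noteq> y \<longrightarrow> ballot Pr v0 x y \<or> ballot Pr v0 y x"
        using ord0 unfolding strict_linear_order_on_def by blast+
      have t: "R a c" if "R a b" "R b c" for a b c
        using that lex_trans[OF o(3), of lvl a b c] unfolding R_def by blast
      have l: "R a b \<or> R b a" if "a \<in> cands Pr" "b \<in> cands Pr" "a \<noteq> b" for a b
        using that o(4) unfolding R_def by (cases "lvl a = lvl b") auto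
      show ?thesis unfolding strict_linear_order_on_def using t l o(2) by (auto simp: R_def)
    qed
    obtain i where i: "i \<notin> voters Pr"
      using ex_new_if_finite[OF V, of "voters Pr"] P by (auto simp: is_profile_def)
    define P' where "P' = add_voter Pr i R"
    have P': "is_profile P'" unfolding P'_def by (rule add_voter_profile[OF P i Rord])
    have yF': "y \<in> F P'"
    proof -
      have "\<forall>z\<in>cands Pr. z \<noteq> y \<longrightarrow> \<not> margin Pr y z > 0 \<longrightarrow> R y z"
        unfolding R_def lvl_def using xy by auto
      then show ?thesis using TPI P yF i Rord unfolding tolerant_positive_involvement_def P'_def by blast
    qed
    have mar': "margin P' a b = margin Pr a b + (if R a b then 1 else -1)"
      if "a \<in> cands Pr" "b \<in> cands Pr" "a \<noteq> b" for a b
      unfolding P'_def by (rule add_voter_margin[OF P i Rord that])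
    have Ryx: "R y x" "\<not> R x y"
    proof -
      have "margin Pr y x < 0" using Mpos margin_anti[of Pr y x] by simp
      then have "lvl x = 2" "lvl y = 1" unfolding lvl_def using xH xy by auto
      then show "R y x" "\<not> R x y" unfolding R_def using xy by auto
    qed
    have M': "margin P' x y = M - 1" using mar'[OF xy] Ryx unfolding M_def by simp
    have cands': "cands P' = cands Pr" unfolding P'_def add_voter_simps by simp
    have step: "xs ! Suc k \<in> H"
      if "xs ! k \<in> H" "margin P' (xs ! k) (xs ! Suc k) \<ge> M - 1" for xs k
    proof (rule ccontr)
      let ?a = "xs ! k" and ?b = "xs ! Suc k"
      assume bH: "?b \<notin> H"
      have ab: "?a \<in> cands Pr" "?b \<in> cands Pr" "?a \<noteq> ?b"
        using margin_pos_cands[OF P', of ?a ?b] that(2) M3 cands' by auto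
      have lt: "margin Pr ?a ?b < M" using Hcl[OF that(1)] bH by force
      have by': "?b \<noteq> y" using bH yH by auto
      show False
      proof (cases "R ?a ?b")
        case False
        then show ?thesis using mar'[OF ab] lt that(2) by simp
      next
        case True
        then have le: "lvl ?a \<le> lvl ?b" unfolding R_def by auto
        show ?thesis
        proof (cases "?a = y")
          case True
          then have "lvl ?b = 2" using le bH by' unfolding lvl_def by (auto split: if_splits)
          then have "margin Pr y ?b \<le> 0" using bH by' unfolding lvl_def by (auto split: if_splits)
          then show ?thesis using mar'[OF ab] that(2) M3 True by (simp split: if_splits)
        next
          case False
          then have "lvl ?a = 3" using that(1) unfolding lvl_def by auto
          moreover have "lvl ?b \<le> 2" using bH unfolding lvl_def by auto
          ultimately show ?thesis using le by simp
        qed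
      qed
    qed
    have SC': "\<forall>xs. majority_path P' xs \<and> hd xs = y \<and> last xs = x \<longrightarrow> path_strength P' xs < margin P' x y"
    proof (intro allI impI, rule ccontr)
      fix xs assume xs: "majority_path P' xs \<and> hd xs = y \<and> last xs = x"
        and "\<not> path_strength P' xs < margin P' x y"
      then have ge: "\<forall>k. Suc k < length xs \<longrightarrow> margin P' (xs ! k) (xs ! Suc k) \<ge> M - 1"
        using strength_ge[of P' xs "M - 1"] M' by auto
      have len: "length xs \<ge> 2" using xs unfolding majority_path_def by auto
      have "\<forall>k. k < length xs \<longrightarrow> xs ! k \<in> H"
      proof (intro allI)
        fix k show "k < length xs \<longrightarrow> xs ! k \<in> H"
        proof (induction k)
          case 0 then show ?case using xs yH len by (auto simp: hd_conv_nth)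
        next
          case (Suc k) then show ?case using step ge by auto
        qed
      qed
      moreover have "last xs = xs ! (length xs - 1)" using len by (intro last_conv_nth) auto
      ultimately have "last xs \<in> H" using len by simp
      then show False using xs xH by simp
    qed
    have "nat (margin P' x y) = n" using M' Mn M_def by simp
    moreover have "margin P' x y > 0" using M' M3 by simp
    ultimately show False using Suc.IH P' yF' SC' by blast
  qed
qed

theorem theorem6p5:
  fixes F :: "('v, 'c) profile \<Rightarrow> 'c set"
  assumes "infinite (UNIV :: 'v set)" and "infinite (UNIV :: 'c set)"
    and "vscc F" and "coherent_defeat F" and "tolerant_positive_involvement F"
    and "is_profile Pr"
  shows "F Pr \<subseteq> split_cycle Pr"
proof
  fix y assume yF: "y \<in> F Pr"
  have yc: "y \<in> cands Pr" using assms(3,6) yF unfolding vscc_def by blast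
  show "y \<in> split_cycle Pr"
  proof (rule ccontr)
    assume "y \<notin> split_cycle Pr"
    then obtain x where d: "sc_defeats Pr x y" using yc unfolding split_cycle_def by blast
    show False
      using main_induct[OF assms(1,4,5), of y x "nat (margin Pr x y)"] assms(6) yF d
      unfolding sc_defeats_def by blast
  qed
qed

end
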